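(* Let $a<b$ be real numbers, let $M\colon[a,b]\to\mathbb{R}$ be non-decreasing, and let $N\colon[M(a),M(b)]\to\mathbb{R}$ be non-decreasing. Let $\Lambda=N\circ M\colon[a,b]\to\mathbb{R}$, let $\lambda$ be the measure on $[a,b]$ corresponding to $\Lambda$, and let $\nu$ be the measure on $[M(a),M(b)]$ corresponding to $N$. Let \[H=\{y\in[M(a),M(b)] : M^{-1}[\{y\}]\text{ contains more than one point}\},\] and let $\Xi\colon[M(a),M(b)]\to[a,b]$ be defined by $\Xi(y)=\sup\{x\in[a,b]: M(x)\le y\}$. Suppose that $N$ is left-continuous at $y$ for each $y\in H$ (where, by convention, $N$ is considered left-continuous at $M(a)$, with $N(M(a)-)=N(M(a))$). Then $\lambda$ is the image measure of $\nu$ under $\Xi$, i.e. $\lambda(E)=\nu(\Xi^{-1}[E])$ for every Borel set $E\subseteq[a,b]$, and for each bounded Borel function $f\colon[a,b]\to\mathbb{R}$, \[\int_a^b f(x)\,dN(M(x))=\int_{M(a)}^{M(b)} f(\Xi(y))\,dN(y).\]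
   Context: "Non-decreasing" is what the paper calls increasing. For a non-decreasing function $F\colon[c,d]\to\mathbb{R}$, the measure corresponding to $F$ is the unique Borel measure $\mu$ on $[c,d]$ such that for every continuous $f\colon[c,d]\to\mathbb{R}$, $\int_{[c,d]} f\,d\mu$ equals the Riemann–Stieltjes integral $\int_c^d f(x)\,dF(x)$. For a bounded Borel function $f$, the Lebesgue–Stieltjes integral $\int_c^d f(x)\,dF(x)$ is defined as $\int_{[c,d]} f\,d\mu$. The notation $\int_a^b f(x)\,dN(M(x))$ means $\int_a^b f(x)\,d\Lambda(x)$ with $\Lambda=N\circ M$. *)

theory Defs
  imports "HOL-Analysis.Analysis"
begin

definition has_rs_integral ::
  "real \<Rightarrow> real \<Rightarrow> (real \<Rightarrow> real) \<Rightarrow> (real \<Rightarrow> real) \<Rightarrow> real \<Rightarrow> bool" where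
  "has_rs_integral c d f F I \<longleftrightarrow>
     (\<forall>\<epsilon>>0. \<exists>\<delta>>0. \<forall>(n::nat) (x::nat \<Rightarrow> real) (t::nat \<Rightarrow> real).
        x 0 = c \<longrightarrow> x n = d \<longrightarrow>
        (\<forall>i<n. x i < x (Suc i) \<and> x (Suc i) - x i < \<delta> \<and> x i \<le> t i \<and> t i \<le> x (Suc i)) \<longrightarrow>
        \<bar>(\<Sum>i<n. f (t i) * (F (x (Suc i)) - F (x i))) - I\<bar> < \<epsilon>)"

definition corr_measure :: "real \<Rightarrow> real \<Rightarrow> (real \<Rightarrow> real) \<Rightarrow> real measure" where
  "corr_measure c d F = (THE \<mu>. sets \<mu> = sets (restrict_space borel {c..d}) \<and>
      finite_measure \<mu> \<and>
      (\<forall>f. continuous_on {c..d} f \<longrightarrow> has_rs_integral c d f F (integral\<^sup>L \<mu> f)))"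

end

theory Submission
  imports Defs
begin

lemma chain_mono:
  fixes x :: "nat \<Rightarrow> real"
  assumes "\<And>i. i < n \<Longrightarrow> x i \<le> x (Suc i)" "i \<le> j" "j \<le> n"
  shows "x i \<le> x j"
  using assms(2,3)
proof (induction j)
  case 0 then show ?case by simp
next
  case (Suc j)
  show ?case
  proof (cases "i = Suc j")
    case True then show ?thesis by simp
  next
    case False
    then have "x i \<le> x j" using Suc by simp
    also have "x j \<le> x (Suc j)" using assms(1) Suc.prems by simp
    finally show ?thesis .
  qed
qed

lemma ind_sum:
  fixes y :: "nat \<Rightarrow> real"
  assumes "\<And>i. i < n \<Longrightarrow> y i \<le> y (Suc i)"
  shows "(\<Sum>i<n. indicator {y i..<y (Suc i)} s :: real) = indicator {y 0..<y n} s"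
  using assms
proof (induction n)
  case 0 then show ?case by simp
next
  case (Suc n)
  have "y 0 \<le> y n" using chain_mono[where x=y and n="Suc n" and i=0 and j=n] Suc.prems by simp
  moreover have "y n \<le> y (Suc n)" using Suc.prems by simp
  moreover have "(\<Sum>i<n. indicator {y i..<y (Suc i)} s :: real) = indicator {y 0..<y n} s"
    using Suc by simp
  ultimately show ?case unfolding sum.lessThan_Suc by (simp add: indicator_def)
qed

lemma rs_unique:
  assumes cd: "c \<le> d" and I: "has_rs_integral c d f F I" and J: "has_rs_integral c d f F J"
  shows "I = J"
proof (rule ccontr)
  assume ne: "I \<noteq> J"
  define e where "e = \<bar>I - J\<bar> / 2"
  have e: "e > 0" using ne by (simp add: e_def)
  obtain d1 where d1: "d1 > 0" and H1: "\<forall>(n::nat) (x::nat \<Rightarrow> real) (t::nat \<Rightarrow> real).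
        x 0 = c \<longrightarrow> x n = d \<longrightarrow>
        (\<forall>i<n. x i < x (Suc i) \<and> x (Suc i) - x i < d1 \<and> x i \<le> t i \<and> t i \<le> x (Suc i)) \<longrightarrow>
        \<bar>(\<Sum>i<n. f (t i) * (F (x (Suc i)) - F (x i))) - I\<bar> < e"
    using I e unfolding has_rs_integral_def by blast
  obtain d2 where d2: "d2 > 0" and H2: "\<forall>(n::nat) (x::nat \<Rightarrow> real) (t::nat \<Rightarrow> real).
        x 0 = c \<longrightarrow> x n = d \<longrightarrow>
        (\<forall>i<n. x i < x (Suc i) \<and> x (Suc i) - x i < d2 \<and> x i \<le> t i \<and> t i \<le> x (Suc i)) \<longrightarrow>
        \<bar>(\<Sum>i<n. f (t i) * (F (x (Suc i)) - F (x i))) - J\<bar> < e"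
    using J e unfolding has_rs_integral_def by blast
  define dl where "dl = min d1 d2"
  have dl: "dl > 0" "dl \<le> d1" "dl \<le> d2" using d1 d2 by (auto simp: dl_def)
  obtain n :: nat and x :: "nat \<Rightarrow> real" where
    P: "x 0 = c" "x n = d" "\<forall>i<n. x i < x (Suc i) \<and> x (Suc i) - x i < dl"
  proof (cases "c = d")
    case True
    show ?thesis by (rule that[where n=0 and x="\<lambda>_. c"]) (use True in auto)
  next
    case False
    then have cd': "c < d" using cd by simp
    define n :: nat where "n = nat \<lceil>(d - c) / dl\<rceil> + 1"
    have npos: "real n > 0" by (simp add: n_def)
    have "(d - c) / dl < real n" unfolding n_def by linarith
    then have small: "(d - c) / real n < dl"
      using npos dl(1) by (simp add: field_simps)
    show ?thesis
    proof (rule that[where n=n and x="\<lambda>i. c + (d - c) * real i / real n"])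
      show "\<forall>i<n. c + (d - c) * real i / real n < c + (d - c) * real (Suc i) / real n \<and>
        c + (d - c) * real (Suc i) / real n - (c + (d - c) * real i / real n) < dl"
      proof (intro allI impI conjI)
        fix i assume "i < n"
        have eq: "c + (d - c) * real (Suc i) / real n - (c + (d - c) * real i / real n) = (d - c) / real n"
          using npos by (simp add: field_simps)
        show "c + (d - c) * real i / real n < c + (d - c) * real (Suc i) / real n"
          using eq cd' npos by (smt (verit) divide_pos_pos)
        show "c + (d - c) * real (Suc i) / real n - (c + (d - c) * real i / real n) < dl"
          using eq small by simp
      qed
    qed (use npos in auto)
  qed
  have "\<bar>(\<Sum>i<n. f (x i) * (F (x (Suc i)) - F (x i))) - I\<bar> < e"
    using H1[rule_format, where n=n and x=x and t=x] P dl by force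
  moreover have "\<bar>(\<Sum>i<n. f (x i) * (F (x (Suc i)) - F (x i))) - J\<bar> < e"
    using H2[rule_format, where n=n and x=x and t=x] P dl by force
  ultimately show False by (auto simp: e_def abs_if split: if_split_asm)
qed


lemma cont_integrable:
  assumes sets: "sets \<mu> = sets (restrict_space borel {c..d::real})" and fin: "finite_measure \<mu>"
    and g: "continuous_on {c..d} g"
  shows "integrable \<mu> (g :: real \<Rightarrow> real)"
proof -
  interpret finite_measure \<mu> by (fact fin)
  have sp: "space \<mu> = {c..d}" using sets_eq_imp_space_eq[OF sets] by simp
  obtain B where B: "\<And>x. x \<in> {c..d} \<Longrightarrow> norm (g x) \<le> B"
    using compact_imp_bounded[OF compact_continuous_image[OF g compact_Icc]]
    unfolding bounded_iff by blast
  have mg: "g \<in> borel_measurable \<mu>"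
    using borel_measurable_continuous_on_restrict[OF g] measurable_cong_sets[OF sets refl] by blast
  have ae: "AE x in \<mu>. norm (g x) \<le> B" using B by (intro AE_I2) (simp add: sp)
  show ?thesis by (rule finite_measure.integrable_const_bound[OF fin ae mg])
qed

lemma meas_lim:
  assumes sets: "sets \<mu> = sets (restrict_space borel {c..d::real})" and fin: "finite_measure \<mu>"
  shows "(\<lambda>n. integral\<^sup>L \<mu> (\<lambda>t. min 1 (max 0 (real n * (t - x)))))
     \<longlonglongrightarrow> measure \<mu> ({x<..} \<inter> space \<mu>)"
proof -
  have sp: "space \<mu> = {c..d}" using sets_eq_imp_space_eq[OF sets] by simp
  interpret finite_measure \<mu> by (fact fin)
  have mb: "\<And>f::real\<Rightarrow>real. f \<in> borel_measurable borel \<Longrightarrow> f \<in> borel_measurable \<mu>"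
    unfolding measurable_cong_sets[OF sets refl] by (rule measurable_restrict_space1)
  have "(\<lambda>n. integral\<^sup>L \<mu> (\<lambda>t. min 1 (max 0 (real n * (t - x))))) \<longlonglongrightarrow> integral\<^sup>L \<mu> (indicator {x<..})"
  proof (rule integral_dominated_convergence[where w="\<lambda>_. 1"])
    show "(indicator {x<..} :: real \<Rightarrow> real) \<in> borel_measurable \<mu>" using mb[of "indicator {x<..}"] by simp
    show "(\<lambda>t. min 1 (max 0 (real n * (t - x)))) \<in> borel_measurable \<mu>" for n
      using mb[of "\<lambda>t. min 1 (max 0 (real n * (t - x)))"] by simp
    show "integrable \<mu> (\<lambda>_. 1::real)" by simp
    show "AE t in \<mu>. norm (min 1 (max 0 (real n * (t - x)))) \<le> 1" for n
      by auto
    show "AE t in \<mu>. (\<lambda>n. min 1 (max 0 (real n * (t - x)))) \<longlonglongrightarrow> indicator {x<..} t"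
    proof (intro AE_I2)
      fix t :: real
      show "(\<lambda>n. min 1 (max 0 (real n * (t - x)))) \<longlonglongrightarrow> indicator {x<..} t"
      proof (cases "t > x")
        case True
        obtain N :: nat where N: "real N > 1 / (t - x)" using reals_Archimedean2 by blast
        have "\<forall>n\<ge>N. min 1 (max 0 (real n * (t - x))) = 1"
        proof (intro allI impI)
          fix n assume "n \<ge> N"
          then have "real n > 1 / (t - x)" using N by linarith
          then have "real n * (t - x) > 1" using True by (simp add: field_simps)
          then show "min 1 (max 0 (real n * (t - x))) = 1" by simp
        qed
        then have "eventually (\<lambda>n. min 1 (max 0 (real n * (t - x))) = 1) sequentially"
          by (auto simp: eventually_sequentially)
        then show ?thesis using True
          by (simp add: tendsto_eventually)
      next
        case False
        then have "\<And>n. min 1 (max 0 (real n * (t - x))) = 0"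
          by (simp add: mult_nonneg_nonpos)
        then show ?thesis using False by simp
      qed
    qed
  qed
  moreover have "integral\<^sup>L \<mu> (indicator {x<..}) = measure \<mu> ({x<..} \<inter> space \<mu>)"
    by simp
  ultimately show ?thesis by simp
qed

lemma meas_unique:
  assumes s1: "sets \<mu>1 = sets (restrict_space borel {c..d::real})"
    and s2: "sets \<mu>2 = sets (restrict_space borel {c..d})"
    and f1: "finite_measure \<mu>1" and f2: "finite_measure \<mu>2"
    and eq: "\<And>f. continuous_on {c..d} f \<Longrightarrow> integral\<^sup>L \<mu>1 f = integral\<^sup>L \<mu>2 (f :: real \<Rightarrow> real)"
  shows "\<mu>1 = \<mu>2"
proof -
  have sp1: "space \<mu>1 = {c..d}" using sets_eq_imp_space_eq[OF s1] by simp
  have sp2: "space \<mu>2 = {c..d}" using sets_eq_imp_space_eq[OF s2] by simp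
  have meq: "measure \<mu>1 ({x<..} \<inter> {c..d}) = measure \<mu>2 ({x<..} \<inter> {c..d})" for x
  proof -
    have c: "continuous_on {c..d} (\<lambda>t. min 1 (max 0 (real n * (t - x))))" for n
      by (intro continuous_intros)
    have "(\<lambda>n. integral\<^sup>L \<mu>1 (\<lambda>t. min 1 (max 0 (real n * (t - x))))) \<longlonglongrightarrow> measure \<mu>2 ({x<..} \<inter> {c..d})"
      using meas_lim[OF s2 f2, of x] by (simp add: eq[OF c] sp2)
    moreover have "(\<lambda>n. integral\<^sup>L \<mu>1 (\<lambda>t. min 1 (max 0 (real n * (t - x))))) \<longlonglongrightarrow> measure \<mu>1 ({x<..} \<inter> {c..d})"
      using meas_lim[OF s1 f1, of x] by (simp add: sp1)
    ultimately show ?thesis using LIMSEQ_unique by blast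
  qed
  have idm1: "(\<lambda>t. t) \<in> measurable \<mu>1 borel"
    unfolding measurable_cong_sets[OF s1 refl] by (rule measurable_restrict_space1) simp
  have idm2: "(\<lambda>t. t) \<in> measurable \<mu>2 borel"
    unfolding measurable_cong_sets[OF s2 refl] by (rule measurable_restrict_space1) simp
  have D: "distr \<mu>1 borel (\<lambda>t. t) = distr \<mu>2 borel (\<lambda>t. t)"
  proof (rule measure_eqI_lessThan)
    show "sets (distr \<mu>1 borel (\<lambda>t. t)) = sets borel" "sets (distr \<mu>2 borel (\<lambda>t. t)) = sets borel" by simp_all
    fix x :: real
    have e1: "emeasure (distr \<mu>1 borel (\<lambda>t. t)) {x<..} = ennreal (measure \<mu>1 ({x<..} \<inter> {c..d}))"
      using idm1 by (simp add: emeasure_distr sp1 finite_measure.emeasure_eq_measure[OF f1])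
    have e2: "emeasure (distr \<mu>2 borel (\<lambda>t. t)) {x<..} = ennreal (measure \<mu>2 ({x<..} \<inter> {c..d}))"
      using idm2 by (simp add: emeasure_distr sp2 finite_measure.emeasure_eq_measure[OF f2])
    show "emeasure (distr \<mu>1 borel (\<lambda>t. t)) {x<..} < \<infinity>" using e1 by simp
    show "emeasure (distr \<mu>1 borel (\<lambda>t. t)) {x<..} = emeasure (distr \<mu>2 borel (\<lambda>t. t)) {x<..}"
      using e1 e2 meq by simp
  qed
  show ?thesis
  proof (rule measure_eqI)
    show "sets \<mu>1 = sets \<mu>2" using s1 s2 by simp
    fix A assume A: "A \<in> sets \<mu>1"
    then have Ab: "A \<in> sets borel" and Asub: "A \<subseteq> {c..d}"
      using s1 sets_restrict_space_iff[of "{c..d}" borel A] by auto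
    have "emeasure \<mu>1 A = emeasure (distr \<mu>1 borel (\<lambda>t. t)) A"
      using idm1 Ab Asub by (simp add: emeasure_distr sp1 Int_absorb2)
    also have "\<dots> = emeasure (distr \<mu>2 borel (\<lambda>t. t)) A" by (simp add: D)
    also have "\<dots> = emeasure \<mu>2 A"
      using idm2 Ab Asub by (simp add: emeasure_distr sp2 Int_absorb2)
    finally show "emeasure \<mu>1 A = emeasure \<mu>2 A" .
  qed
qed


lemma rs_core:
  fixes c d A B :: real and F K g :: "real \<Rightarrow> real"
  assumes mono: "mono_on {c..d} F"
    and AB: "A = F c" "B = F d"
    and Kmeas: "K \<in> borel_measurable (restrict_space lborel {A..<B})"
    and Kin: "\<And>s. s \<in> {A..<B} \<Longrightarrow> K s \<in> {c..d}"
    and key: "\<And>x y s. c \<le> x \<Longrightarrow> x \<le> y \<Longrightarrow> y \<le> d \<Longrightarrow> F x \<le> s \<Longrightarrow> s < F y \<Longrightarrow> x \<le> K s \<and> K s \<le> y"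
    and g: "continuous_on {c..d} g"
  shows "has_rs_integral c d g F (integral\<^sup>L (restrict_space lborel {A..<B}) (\<lambda>s. g (K s)))"
proof -
  define L where "L = restrict_space lborel {A..<B}"
  have spL: "space L = {A..<B}" by (simp add: L_def)
  have emL: "\<And>S. S \<subseteq> {A..<B} \<Longrightarrow> emeasure L S = emeasure lborel S"
    by (simp add: L_def emeasure_restrict_space)
  have setsL: "\<And>S. S \<subseteq> {A..<B} \<Longrightarrow> S \<in> sets borel \<Longrightarrow> S \<in> sets L"
    by (simp add: L_def sets_restrict_space_iff)
  have finL: "finite_measure L"
  proof (rule finite_measureI)
    show "emeasure L (space L) \<noteq> \<infinity>"
      by (cases "A \<le> B") (auto simp: spL emL)
  qed
  have Km: "K \<in> measurable L (restrict_space borel {c..d})"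
    by (rule measurable_restrict_space2) (use Kin Kmeas in \<open>auto simp: spL L_def\<close>)
  have mgK: "(\<lambda>s. g (K s)) \<in> borel_measurable L"
    by (rule measurable_compose[OF Km borel_measurable_continuous_on_restrict[OF g]])
  obtain Bg where Bg: "\<And>x. x \<in> {c..d} \<Longrightarrow> norm (g x) \<le> Bg"
    using compact_imp_bounded[OF compact_continuous_image[OF g compact_Icc]]
    unfolding bounded_iff by blast
  have intK: "integrable L (\<lambda>s. g (K s))"
  proof (rule finite_measure.integrable_const_bound[OF finL _ mgK])
    show "AE x in L. norm (g (K x)) \<le> Bg" using Bg Kin by (intro AE_I2) (simp add: spL)
  qed
  show ?thesis
    unfolding has_rs_integral_def L_def[symmetric]
  proof (intro allI impI)
    fix \<epsilon> :: real assume \<epsilon>: "\<epsilon> > 0"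
    define e where "e = \<epsilon> / (2 * (\<bar>B - A\<bar> + 1))"
    have hpos: "0 < 2 * (\<bar>B - A\<bar> + 1)" by (simp add: add_nonneg_pos)
    have e: "e > 0" unfolding e_def using \<epsilon> hpos by (rule divide_pos_pos)
    have "e * \<bar>B - A\<bar> < \<epsilon>"
    proof -
      have "e * \<bar>B - A\<bar> \<le> e * (\<bar>B - A\<bar> + 1)" using e by simp
      also have "\<dots> = \<epsilon> / 2"
      proof -
        have p: "\<bar>B - A\<bar> + 1 > 0" by (simp add: add_nonneg_pos)
        then show ?thesis unfolding e_def by (simp add: field_simps)
      qed
      finally show ?thesis using \<epsilon> by simp
    qed
    note eB = this
    have uc: "uniformly_continuous_on {c..d} g"
      using compact_uniformly_continuous[OF g compact_Icc] .
    obtain \<delta> where \<delta>: "\<delta> > 0" and D: "\<And>u v. u \<in> {c..d} \<Longrightarrow> v \<in> {c..d} \<Longrightarrow> dist u v < \<delta> \<Longrightarrow> dist (g u) (g v) < e"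
      using uc e unfolding uniformly_continuous_on_def by metis
    show "\<exists>\<delta>>0. \<forall>n x t. x 0 = c \<longrightarrow> x n = d \<longrightarrow>
         (\<forall>i<n. x i < x (Suc i) \<and> x (Suc i) - x i < \<delta> \<and> x i \<le> t i \<and> t i \<le> x (Suc i)) \<longrightarrow>
         \<bar>(\<Sum>i<n. g (t i) * (F (x (Suc i)) - F (x i))) - integral\<^sup>L L (\<lambda>s. g (K s))\<bar> < \<epsilon>"
    proof (intro exI[of _ \<delta>] conjI allI impI)
      show "\<delta> > 0" by (fact \<delta>)
      fix n :: nat and x t :: "nat \<Rightarrow> real"
      assume x0: "x 0 = c" and xn: "x n = d"
        and P: "\<forall>i<n. x i < x (Suc i) \<and> x (Suc i) - x i < \<delta> \<and> x i \<le> t i \<and> t i \<le> x (Suc i)"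
      have xmono: "x i \<le> x j" if "i \<le> j" "j \<le> n" for i j
        using chain_mono[where x=x and n=n and i=i and j=j] P that by force
      have xin: "c \<le> x i \<and> x i \<le> d" if "i \<le> n" for i
        using xmono[of 0 i] xmono[of i n] that x0 xn by simp
      define y where "y i = F (x i)" for i
      have ymono: "y i \<le> y (Suc i)" if "i < n" for i
        unfolding y_def using xin[of i] xin[of "Suc i"] that P
        by (intro mono_onD[OF mono]) auto
      have y0: "y 0 = A" and yn: "y n = B" using x0 xn AB by (simp_all add: y_def)
      have ymono2: "y i \<le> y j" if "i \<le> j" "j \<le> n" for i j
        using chain_mono[where x=y and n=n and i=i and j=j] ymono that by force
      have Isub: "{y i..<y (Suc i)} \<subseteq> {A..<B}" if "i < n" for i
        using ymono2[of 0 i] ymono2[of "Suc i" n] that y0 yn by auto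
      have intI: "integrable L (indicator {y i..<y (Suc i)} :: real \<Rightarrow> real)" if "i < n" for i
        using Isub[OF that] ymono[OF that]
        by (intro integrable_real_indicator setsL) (auto simp: emL)
      have valI: "integral\<^sup>L L (indicator {y i..<y (Suc i)} :: real \<Rightarrow> real) = y (Suc i) - y i"
        if "i < n" for i
      proof -
        have "integral\<^sup>L L (indicator {y i..<y (Suc i)} :: real \<Rightarrow> real) = measure L {y i..<y (Suc i)}"
        proof -
          have "{y i..<y (Suc i)} \<inter> space L = {y i..<y (Suc i)}" using Isub[OF that] spL by auto
          then show ?thesis by (metis Bochner_Integration.integral_indicator)
        qed
        also have "\<dots> = y (Suc i) - y i"
          using emL[OF Isub[OF that]] ymono[OF that] by (simp add: measure_def)
        finally show ?thesis .
      qed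
      define \<phi> where "\<phi> s = (\<Sum>i<n. g (t i) * indicator {y i..<y (Suc i)} s)" for s
      have int\<phi>: "integrable L \<phi>"
        unfolding \<phi>_def by (rule Bochner_Integration.integrable_sum) (auto intro!: integrable_mult_right intI)
      have val\<phi>: "integral\<^sup>L L \<phi> = (\<Sum>i<n. g (t i) * (F (x (Suc i)) - F (x i)))"
      proof -
        have "integral\<^sup>L L \<phi> = (\<Sum>i<n. integral\<^sup>L L (\<lambda>s. g (t i) * indicator {y i..<y (Suc i)} s))"
          unfolding \<phi>_def by (rule Bochner_Integration.integral_sum) (auto intro!: integrable_mult_right intI)
        also have "\<dots> = (\<Sum>i<n. g (t i) * (y (Suc i) - y i))"
        proof (rule sum.cong[OF refl])
          fix i assume "i \<in> {..<n}"
          then have i: "i < n" by simp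
          show "integral\<^sup>L L (\<lambda>s. g (t i) * indicator {y i..<y (Suc i)} s) = g (t i) * (y (Suc i) - y i)"
            using valI[OF i] by (simp only: integral_mult_right_zero)
        qed
        finally show ?thesis by (simp add: y_def)
      qed
      have pw: "\<bar>\<phi> s - g (K s)\<bar> \<le> e" if s: "s \<in> {A..<B}" for s
      proof -
        have sum1: "(\<Sum>i<n. indicator {y i..<y (Suc i)} s :: real) = 1"
          using ind_sum[of n y s] ymono s y0 yn by simp
        have "\<phi> s - g (K s) = (\<Sum>i<n. (g (t i) - g (K s)) * indicator {y i..<y (Suc i)} s)"
        proof -
          have "(\<Sum>i<n. (g (t i) - g (K s)) * indicator {y i..<y (Suc i)} s) =
              \<phi> s - g (K s) * (\<Sum>i<n. indicator {y i..<y (Suc i)} s)"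
            unfolding \<phi>_def by (simp only: left_diff_distrib sum_subtractf sum_distrib_left)
          then show ?thesis using sum1 by simp
        qed
        also have "\<bar>\<dots>\<bar> \<le> (\<Sum>i<n. \<bar>(g (t i) - g (K s)) * indicator {y i..<y (Suc i)} s\<bar>)"
          by (rule sum_abs)
        also have "\<dots> \<le> (\<Sum>i<n. e * indicator {y i..<y (Suc i)} s)"
        proof (rule sum_mono)
          fix i assume "i \<in> {..<n}"
          then have i: "i < n" by simp
          show "\<bar>(g (t i) - g (K s)) * indicator {y i..<y (Suc i)} s\<bar> \<le> e * indicator {y i..<y (Suc i)} s"
          proof (cases "s \<in> {y i..<y (Suc i)}")
            case True
            have "x i \<le> K s \<and> K s \<le> x (Suc i)"
              using key[of "x i" "x (Suc i)" s] xin[of i] xin[of "Suc i"] i P True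
              by (auto simp: y_def)
            moreover have "x i \<le> t i" "t i \<le> x (Suc i)" "x (Suc i) - x i < \<delta>" using P i by auto
            ultimately have "dist (t i) (K s) < \<delta>" by (auto simp: dist_real_def)
            moreover have "t i \<in> {c..d}" using xin[of i] xin[of "Suc i"] i P by force
            moreover have "K s \<in> {c..d}" using Kin s by simp
            ultimately have "dist (g (t i)) (g (K s)) < e" using D by blast
            then show ?thesis using True by (simp add: dist_real_def)
          qed simp
        qed
        also have "\<dots> = e" using sum1 by (simp add: sum_distrib_left[symmetric])
        finally show ?thesis .
      qed
      have "\<bar>integral\<^sup>L L \<phi> - integral\<^sup>L L (\<lambda>s. g (K s))\<bar> = \<bar>integral\<^sup>L L (\<lambda>s. \<phi> s - g (K s))\<bar>"
        using int\<phi> intK by simp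
      also have "\<dots> \<le> integral\<^sup>L L (\<lambda>s. norm (\<phi> s - g (K s)))"
        using integral_norm_bound[of L "\<lambda>s. \<phi> s - g (K s)"] by simp
      also have "\<dots> \<le> integral\<^sup>L L (\<lambda>s. e)"
      proof (rule integral_mono)
        show "integrable L (\<lambda>s. norm (\<phi> s - g (K s)))" using int\<phi> intK by simp
        show "integrable L (\<lambda>s. e)" using finL by (simp add: finite_measure.integrable_const)
        show "\<And>s. s \<in> space L \<Longrightarrow> norm (\<phi> s - g (K s)) \<le> e" using pw by (simp add: spL)
      qed
      also have "\<dots> = measure L {A..<B} * e" by (simp add: spL)
      also have "\<dots> \<le> \<bar>B - A\<bar> * e"
      proof -
        have "measure L {A..<B} \<le> \<bar>B - A\<bar>"
          by (cases "A \<le> B") (auto simp: measure_def emL)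
        then show ?thesis using e by (simp add: mult_right_mono)
      qed
      finally show "\<bar>(\<Sum>i<n. g (t i) * (F (x (Suc i)) - F (x i))) - integral\<^sup>L L (\<lambda>s. g (K s))\<bar> < \<epsilon>"
        using eB val\<phi> by (simp add: mult.commute)
    qed
  qed
qed


definition qf :: "real \<Rightarrow> real \<Rightarrow> (real \<Rightarrow> real) \<Rightarrow> real \<Rightarrow> real" where
  "qf c d F s = Sup {x \<in> {c..d}. F x \<le> s}"

lemma qf_bdd: "bdd_above {x \<in> {c..d::real}. F x \<le> s}"
  by (rule bdd_aboveI[of _ d]) auto

lemma qf_ge: "x \<in> {c..d} \<Longrightarrow> F x \<le> s \<Longrightarrow> x \<le> qf c d F s"
  unfolding qf_def by (rule cSup_upper) (auto intro: qf_bdd)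

lemma qf_le:
  assumes "x0 \<in> {c..d}" "F x0 \<le> s" "\<And>z. z \<in> {c..d} \<Longrightarrow> F z \<le> s \<Longrightarrow> z \<le> y"
  shows "qf c d F s \<le> y"
  unfolding qf_def using assms by (intro cSup_least) auto

lemma qf_in: "c \<le> d \<Longrightarrow> F c \<le> s \<Longrightarrow> qf c d F s \<in> {c..d}"
  using qf_ge[of c c d F s] qf_le[of c c d F s d] by auto

lemma qf_mono: "c \<le> d \<Longrightarrow> F c \<le> s \<Longrightarrow> s \<le> s' \<Longrightarrow> qf c d F s \<le> qf c d F s'"
  unfolding qf_def by (rule cSup_subset_mono) (auto intro: qf_bdd)

lemma qf_key:
  assumes "mono_on {c..d} F" "c \<le> x" "x \<le> y" "y \<le> d" "F x \<le> s" "s < F y"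
  shows "x \<le> qf c d F s \<and> qf c d F s \<le> y"
proof
  show "x \<le> qf c d F s" using assms by (intro qf_ge) auto
  show "qf c d F s \<le> y"
  proof (rule qf_le[of x])
    fix z assume z: "z \<in> {c..d}" "F z \<le> s"
    show "z \<le> y"
    proof (rule ccontr)
      assume "\<not> z \<le> y"
      then have "F y \<le> F z" using assms z by (intro mono_onD[OF assms(1)]) auto
      then show False using z assms by simp
    qed
  qed (use assms in auto)
qed

lemma qf_mono_on: "c \<le> d \<Longrightarrow> mono_on {F c..} (qf c d F)"
  by (intro mono_onI qf_mono) auto

lemma qf_meas_borel: "c \<le> d \<Longrightarrow> F c \<le> A \<Longrightarrow> qf c d F \<in> borel_measurable (restrict_space borel {A..B})"
  by (rule borel_measurable_mono_on_fnc) (auto intro: mono_on_subset[OF qf_mono_on])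

lemma qf_meas_L: "c \<le> d \<Longrightarrow> qf c d F \<in> borel_measurable (restrict_space lborel {F c..<B})"
proof -
  assume cd: "c \<le> d"
  have "qf c d F \<in> borel_measurable (restrict_space borel {F c..<B})"
    by (rule borel_measurable_mono_on_fnc) (auto intro: mono_on_subset[OF qf_mono_on[OF cd]])
  then show ?thesis
    using measurable_cong_sets[OF sets_restrict_space_cong[OF sets_lborel] refl] by blast
qed

lemma finL: "finite_measure (restrict_space lborel {A..<B::real})"
proof (rule finite_measureI)
  show "emeasure (restrict_space lborel {A..<B}) (space (restrict_space lborel {A..<B})) \<noteq> \<infinity>"
    by (cases "A \<le> B") (auto simp: emeasure_restrict_space)
qed

lemma corr_eq:
  assumes cd: "c \<le> d" and s: "sets \<mu> = sets (restrict_space borel {c..d})"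
    and fin: "finite_measure \<mu>"
    and rs: "\<forall>f. continuous_on {c..d} f \<longrightarrow> has_rs_integral c d f F (integral\<^sup>L \<mu> f)"
  shows "corr_measure c d F = \<mu>"
  unfolding corr_measure_def
proof (rule the_equality)
  show "sets \<mu> = sets (restrict_space borel {c..d}) \<and> finite_measure \<mu> \<and>
    (\<forall>f. continuous_on {c..d} f \<longrightarrow> has_rs_integral c d f F (integral\<^sup>L \<mu> f))"
    using s fin rs by blast
  fix \<mu>' assume H: "sets \<mu>' = sets (restrict_space borel {c..d}) \<and> finite_measure \<mu>' \<and>
    (\<forall>f. continuous_on {c..d} f \<longrightarrow> has_rs_integral c d f F (integral\<^sup>L \<mu>' f))"
  show "\<mu>' = \<mu>"
  proof (rule meas_unique[of \<mu>' c d \<mu>])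
    fix f :: "real \<Rightarrow> real" assume f: "continuous_on {c..d} f"
    show "integral\<^sup>L \<mu>' f = integral\<^sup>L \<mu> f"
      using rs_unique[OF cd] H rs f by blast
  qed (use H s fin in auto)
qed


theorem mainTheorem2:
  fixes a b :: real and M N :: "real \<Rightarrow> real"
  assumes "a < b"
    and "mono_on {a..b} M"
    and "mono_on {M a..M b} N"
    and "\<forall>y\<in>{y \<in> {M a..M b}. \<exists>x1\<in>{a..b}. \<exists>x2\<in>{a..b}. x1 \<noteq> x2 \<and> M x1 = y \<and> M x2 = y}.
           y \<noteq> M a \<longrightarrow> (N \<longlongrightarrow> N y) (at_left y)"
  shows "(\<lambda>y. Sup {x \<in> {a..b}. M x \<le> y})
           \<in> measurable (corr_measure (M a) (M b) N) (corr_measure a b (N \<circ> M))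
    \<and> (\<forall>E \<in> sets (corr_measure a b (N \<circ> M)).
          emeasure (corr_measure a b (N \<circ> M)) E
          = emeasure (corr_measure (M a) (M b) N)
              ((\<lambda>y. Sup {x \<in> {a..b}. M x \<le> y}) -` E \<inter> space (corr_measure (M a) (M b) N)))
    \<and> (\<forall>f :: real \<Rightarrow> real. f \<in> borel_measurable (restrict_space borel {a..b})
          \<longrightarrow> (\<exists>B. \<forall>x\<in>{a..b}. \<bar>f x\<bar> \<le> B)
          \<longrightarrow> integral\<^sup>L (corr_measure a b (N \<circ> M)) f
              = integral\<^sup>L (corr_measure (M a) (M b) N) (\<lambda>y. f (Sup {x \<in> {a..b}. M x \<le> y})))"
proof -
  note ab = assms(1) and monoM = assms(2) and monoN = assms(3) and lc = assms(4)
  define c1 where "c1 = M a"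
  define d1 where "d1 = M b"
  have cd1: "c1 \<le> d1" unfolding c1_def d1_def using ab by (intro mono_onD[OF monoM]) auto
  have Min: "M x \<in> {c1..d1}" if "x \<in> {a..b}" for x
    unfolding c1_def d1_def using that by (auto intro: mono_onD[OF monoM])
  define A where "A = N c1"
  define B where "B = N d1"
  define L where "L = restrict_space lborel {A..<B}"
  define G where "G = qf c1 d1 N"
  define Xi where "Xi = qf a b M"
  have Xi_eq: "\<And>y. Sup {x \<in> {a..b}. M x \<le> y} = Xi y"
    by (simp add: Xi_def qf_def)
  have finL': "finite_measure L" unfolding L_def by (rule finL)
  have spL: "space L = {A..<B}" by (simp add: L_def)
  have Gin: "G s \<in> {c1..d1}" if "s \<in> {A..<B}" for s
    unfolding G_def using that cd1 by (intro qf_in) (auto simp: A_def)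
  have Gm: "G \<in> measurable L (restrict_space borel {c1..d1})"
  proof (rule measurable_restrict_space2)
    show "G \<in> space L \<rightarrow> {c1..d1}" using Gin by (auto simp: spL)
    show "G \<in> borel_measurable L" unfolding L_def G_def A_def by (rule qf_meas_L[OF cd1])
  qed
  have Xi_in: "Xi y \<in> {a..b}" if "y \<in> {c1..d1}" for y
    unfolding Xi_def using that ab by (intro qf_in) (auto simp: c1_def)
  have Xim0: "Xi \<in> borel_measurable (restrict_space borel {c1..d1})"
    unfolding Xi_def c1_def using ab by (intro qf_meas_borel) auto
  have Xim: "Xi \<in> measurable (restrict_space borel {c1..d1}) (restrict_space borel {a..b})"
  proof (rule measurable_restrict_space2)
    show "Xi \<in> space (restrict_space borel {c1..d1}) \<rightarrow> {a..b}" using Xi_in by auto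
  qed (rule Xim0)
  define \<nu> where "\<nu> = distr L (restrict_space borel {c1..d1}) G"
  have s\<nu>: "sets \<nu> = sets (restrict_space borel {c1..d1})" by (simp add: \<nu>_def)
  have fin\<nu>: "finite_measure \<nu>" unfolding \<nu>_def by (rule finite_measure.finite_measure_distr[OF finL' Gm])
  have Xim': "Xi \<in> measurable \<nu> (restrict_space borel {a..b})"
    using Xim measurable_cong_sets[OF s\<nu> refl] by blast
  define D where "D = distr \<nu> (restrict_space borel {a..b}) Xi"
  have sD: "sets D = sets (restrict_space borel {a..b})" by (simp add: D_def)
  have finD: "finite_measure D" unfolding D_def by (rule finite_measure.finite_measure_distr[OF fin\<nu> Xim'])
  have rs\<nu>: "\<forall>f. continuous_on {c1..d1} f \<longrightarrow> has_rs_integral c1 d1 f N (integral\<^sup>L \<nu> f)"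
  proof (intro allI impI)
    fix f :: "real \<Rightarrow> real" assume f: "continuous_on {c1..d1} f"
    have "integral\<^sup>L \<nu> f = integral\<^sup>L L (\<lambda>s. f (G s))"
      unfolding \<nu>_def by (rule integral_distr[OF Gm borel_measurable_continuous_on_restrict[OF f]])
    moreover have "has_rs_integral c1 d1 f N (integral\<^sup>L L (\<lambda>s. f (G s)))"
      unfolding L_def
    proof (rule rs_core)
      show "mono_on {c1..d1} N" using monoN by (simp add: c1_def d1_def)
      show "A = N c1" "B = N d1" by (simp_all add: A_def B_def)
      show "G \<in> borel_measurable (restrict_space lborel {A..<B})"
        unfolding G_def A_def by (rule qf_meas_L[OF cd1])
      show "\<And>s. s \<in> {A..<B} \<Longrightarrow> G s \<in> {c1..d1}" by (rule Gin)
      show "\<And>x y s. c1 \<le> x \<Longrightarrow> x \<le> y \<Longrightarrow> y \<le> d1 \<Longrightarrow> N x \<le> s \<Longrightarrow> s < N y \<Longrightarrow> x \<le> G s \<and> G s \<le> y"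
        unfolding G_def by (rule qf_key) (use monoN in \<open>auto simp: c1_def d1_def\<close>)
    qed (rule f)
    ultimately show "has_rs_integral c1 d1 f N (integral\<^sup>L \<nu> f)" by simp
  qed
  have keyD: "x \<le> Xi (G s) \<and> Xi (G s) \<le> y"
    if xy: "a \<le> x" "x \<le> y" "y \<le> b" and s1: "(N \<circ> M) x \<le> s" and s2: "s < (N \<circ> M) y" for x y s
  proof -
    define Y where "Y = G s"
    have MxMy: "M x \<le> M y" using xy by (intro mono_onD[OF monoM]) auto
    have YY: "M x \<le> Y \<and> Y \<le> M y"
      unfolding Y_def G_def
      using Min[of x] Min[of y] xy s1 s2 MxMy monoN
      by (intro qf_key) (auto simp: c1_def d1_def)
    show ?thesis
      unfolding Y_def[symmetric]
    proof
      show "x \<le> Xi Y" unfolding Xi_def using xy YY by (intro qf_ge) auto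
      show "Xi Y \<le> y" unfolding Xi_def
      proof (rule qf_le[of x])
        fix z assume z: "z \<in> {a..b}" "M z \<le> Y"
        show "z \<le> y"
        proof (rule ccontr)
          assume zy: "\<not> z \<le> y"
          have "M y \<le> M z" using zy z xy by (intro mono_onD[OF monoM]) auto
          then have MzY: "M z = Y" "M y = Y" using z YY by auto
          have Yin: "Y \<in> {M a..M b}" using Min[of y] xy MzY by (auto simp: c1_def d1_def)
          have NY: "s < N Y" using s2 MzY by simp
          have "Y \<noteq> M a"
          proof
            assume "Y = M a"
            then have "M x = Y" using YY Min[of x] xy by (auto simp: c1_def)
            then show False using s1 NY by simp
          qed
          moreover have "\<exists>x1\<in>{a..b}. \<exists>x2\<in>{a..b}. x1 \<noteq> x2 \<and> M x1 = Y \<and> M x2 = Y"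
            using z xy zy MzY by (intro bexI[of _ z] bexI[of _ y]) auto
          ultimately have tend: "(N \<longlongrightarrow> N Y) (at_left Y)" using lc Yin by blast
          have "eventually (\<lambda>t. s < N t) (at_left Y)" by (rule order_tendstoD(1)[OF tend NY])
          then obtain b0 where b0: "b0 < Y" "\<And>t. b0 < t \<Longrightarrow> t < Y \<Longrightarrow> s < N t"
            unfolding eventually_at_left_field by blast
          define S where "S = {y' \<in> {c1..d1}. N y' \<le> s}"
          have YS: "Y = Sup S" by (simp add: Y_def G_def qf_def S_def)
          have Sne: "S \<noteq> {}" using Min[of x] xy s1 by (auto simp: S_def)
          have Sbdd: "bdd_above S" unfolding S_def by (rule qf_bdd)
          obtain t where t: "t \<in> S" "b0 < t" using less_cSup_iff[OF Sne Sbdd, of b0] b0(1) YS by auto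
          have "t \<le> Y" using cSup_upper[OF t(1) Sbdd] YS by simp
          moreover have "t \<noteq> Y" using t(1) NY by (auto simp: S_def)
          ultimately have "s < N t" using b0(2)[OF t(2)] by simp
          then show False using t(1) by (simp add: S_def)
        qed
      qed (use xy YY in auto)
    qed
  qed
  have rsD: "\<forall>f. continuous_on {a..b} f \<longrightarrow> has_rs_integral a b f (N \<circ> M) (integral\<^sup>L D f)"
  proof (intro allI impI)
    fix f :: "real \<Rightarrow> real" assume f: "continuous_on {a..b} f"
    have fXm: "(\<lambda>y. f (Xi y)) \<in> borel_measurable (restrict_space borel {c1..d1})"
      by (rule measurable_compose[OF Xim borel_measurable_continuous_on_restrict[OF f]])
    have "integral\<^sup>L D f = integral\<^sup>L \<nu> (\<lambda>y. f (Xi y))"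
      unfolding D_def by (rule integral_distr[OF Xim' borel_measurable_continuous_on_restrict[OF f]])
    also have "\<dots> = integral\<^sup>L L (\<lambda>s. f (Xi (G s)))"
      unfolding \<nu>_def by (rule integral_distr[OF Gm fXm])
    finally have eq: "integral\<^sup>L D f = integral\<^sup>L L (\<lambda>s. f (Xi (G s)))" .
    have "has_rs_integral a b f (N \<circ> M) (integral\<^sup>L L (\<lambda>s. f (Xi (G s))))"
      unfolding L_def
    proof (rule rs_core)
      show "mono_on {a..b} (N \<circ> M)"
      proof (rule mono_onI)
        fix r t assume "r \<in> {a..b}" "t \<in> {a..b}" "r \<le> t"
        then show "(N \<circ> M) r \<le> (N \<circ> M) t"
          using Min[of r] Min[of t] mono_onD[OF monoM, of r t]
          by (auto intro!: mono_onD[OF monoN] simp: c1_def d1_def)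
      qed
      show "A = (N \<circ> M) a" "B = (N \<circ> M) b" by (simp_all add: A_def B_def c1_def d1_def)
      show "(\<lambda>s. Xi (G s)) \<in> borel_measurable (restrict_space lborel {A..<B})"
        using measurable_compose[OF Gm Xim0] by (simp add: L_def)
      show "\<And>s. s \<in> {A..<B} \<Longrightarrow> Xi (G s) \<in> {a..b}" using Gin Xi_in by blast
      show "\<And>x y s. a \<le> x \<Longrightarrow> x \<le> y \<Longrightarrow> y \<le> b \<Longrightarrow> (N \<circ> M) x \<le> s \<Longrightarrow> s < (N \<circ> M) y \<Longrightarrow> x \<le> Xi (G s) \<and> Xi (G s) \<le> y"
        by (rule keyD)
    qed (rule f)
    then show "has_rs_integral a b f (N \<circ> M) (integral\<^sup>L D f)" using eq by simp
  qed
  have C1: "corr_measure (M a) (M b) N = \<nu>"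
    using corr_eq[OF cd1 s\<nu> fin\<nu> rs\<nu>] by (simp add: c1_def d1_def)
  have C2: "corr_measure a b (N \<circ> M) = D"
    using corr_eq[of a b D] ab sD finD rsD by simp
  show ?thesis
    unfolding Xi_eq C1 C2
  proof (intro conjI ballI allI impI)
    show "Xi \<in> measurable \<nu> D" using Xim' measurable_cong_sets[OF refl sD] by blast
    fix E assume "E \<in> sets D"
    then have "E \<in> sets (restrict_space borel {a..b})" using sD by simp
    then show "emeasure D E = emeasure \<nu> (Xi -` E \<inter> space \<nu>)"
      unfolding D_def by (rule emeasure_distr[OF Xim'])
  next
    fix f :: "real \<Rightarrow> real" assume fm: "f \<in> borel_measurable (restrict_space borel {a..b})"
      and "\<exists>B. \<forall>x\<in>{a..b}. \<bar>f x\<bar> \<le> B"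
    show "integral\<^sup>L D f = integral\<^sup>L \<nu> (\<lambda>y. f (Xi y))"
      unfolding D_def by (rule integral_distr[OF Xim' fm])
  qed
qed

end
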